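(* Let $r$ be a positive integer or $\infty$. Suppose $(A,B)$ is a partition of the vertex set of a graph $G$ such that the relation $\equiv_{(A,B)}$ has $k$ equivalence classes. If $G[A]$ and $G[B]$ each have a weak $r$-guidance system of maximum outdegree at most $c$, then $G$ has a weak $r$-guidance system of maximum outdegree at most $c+k$.
   Context: All graphs are finite, simple and undirected. For a partition $(A,B)$ of $V(G)$, $u\equiv_{(A,B)}v$ means that either $u,v\in A$ and $u,v$ have the same neighbors in $B$, or $u,v\in B$ and $u,v$ have the same neighbors in $A$. A partial orientation of $G$ is a directed graph $\vec{H}$ on $V(G)$ with every $(u,v)\in E(\vec{H})$ satisfying $uv\in E(G)$. $B_{\vec{H}}(v,a)$ is the set of vertices reachable from $v$ by a directed path of length at most $a$. For a positive integer $r$, a weak $r$-guidance system is a partial orientation $\vec{H}$ such that for any distinct $u,v$ at distance $\ell\le r$ in $G$ there exist non-negative integers $a,b$ with $a+b=\ell-1$ such that $G$ has an edge between $B_{\vec{H}}(u,a)$ and $B_{\vec{H}}(v,b)$; a weak $\infty$-guidance system is a partial orientation that is a weak $r$-guidance system for every positive integer $r$. *)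

theory Defs
  imports Main "HOL-Library.Extended_Nat"
begin

definition graph :: "'a set \<Rightarrow> ('a \<times> 'a) set \<Rightarrow> bool" where
  "graph V E \<longleftrightarrow> finite V \<and> E \<subseteq> V \<times> V \<and> sym E \<and> irrefl E"

definition induced :: "('a \<times> 'a) set \<Rightarrow> 'a set \<Rightarrow> ('a \<times> 'a) set" where
  "induced E A = E \<inter> (A \<times> A)"

definition gdist :: "('a \<times> 'a) set \<Rightarrow> 'a \<Rightarrow> 'a \<Rightarrow> nat \<Rightarrow> bool" where
  "gdist E u v l \<longleftrightarrow> (u, v) \<in> E ^^ l \<and> (\<forall>m<l. (u, v) \<notin> E ^^ m)"

definition partial_orientation :: "'a set \<Rightarrow> ('a \<times> 'a) set \<Rightarrow> ('a \<times> 'a) set \<Rightarrow> bool" where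
  "partial_orientation V E H \<longleftrightarrow> H \<subseteq> E"

definition out_ball :: "('a \<times> 'a) set \<Rightarrow> 'a \<Rightarrow> nat \<Rightarrow> 'a set" where
  "out_ball H v a = {w. \<exists>i\<le>a. (v, w) \<in> H ^^ i}"

definition weak_guidance :: "'a set \<Rightarrow> ('a \<times> 'a) set \<Rightarrow> nat \<Rightarrow> ('a \<times> 'a) set \<Rightarrow> bool" where
  "weak_guidance V E r H \<longleftrightarrow> partial_orientation V E H \<and>
     (\<forall>u\<in>V. \<forall>v\<in>V. \<forall>l. u \<noteq> v \<and> gdist E u v l \<and> l \<le> r \<longrightarrow>
        (\<exists>a b. a + b = l - 1 \<and>
           (\<exists>x\<in>out_ball H u a. \<exists>y\<in>out_ball H v b. (x, y) \<in> E)))"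

definition weak_guidance_enat :: "'a set \<Rightarrow> ('a \<times> 'a) set \<Rightarrow> enat \<Rightarrow> ('a \<times> 'a) set \<Rightarrow> bool" where
  "weak_guidance_enat V E r H = (case r of enat n \<Rightarrow> weak_guidance V E n H
                                  | \<infinity> \<Rightarrow> (\<forall>n\<ge>1. weak_guidance V E n H))"

definition max_outdeg_le :: "'a set \<Rightarrow> ('a \<times> 'a) set \<Rightarrow> nat \<Rightarrow> bool" where
  "max_outdeg_le V H c \<longleftrightarrow> (\<forall>v\<in>V. card {w. (v, w) \<in> H} \<le> c)"

definition equiv_AB :: "('a \<times> 'a) set \<Rightarrow> 'a set \<Rightarrow> 'a set \<Rightarrow> 'a \<Rightarrow> 'a \<Rightarrow> bool" where
  "equiv_AB E A B u v \<longleftrightarrow>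
     (u \<in> A \<and> v \<in> A \<and> {w\<in>B. (u, w) \<in> E} = {w\<in>B. (v, w) \<in> E}) \<or>
     (u \<in> B \<and> v \<in> B \<and> {w\<in>A. (u, w) \<in> E} = {w\<in>A. (v, w) \<in> E})"

end

theory Submission
  imports Defs
begin

lemma relpow_mono_sub: "(R :: ('a \<times> 'a) set) \<subseteq> S \<Longrightarrow> R ^^ n \<subseteq> S ^^ n"
proof (induction n)
  case 0 then show ?case by (auto elim!: relpow_0_E intro: relpow_0_I)
next
  case (Suc n) then show ?case by (simp add: relcomp_mono)
qed

lemma relpow_sym: "sym E \<Longrightarrow> (x, y) \<in> E ^^ n \<Longrightarrow> (y, x) \<in> E ^^ n"
proof (induction n arbitrary: x y)
  case 0 then show ?case by simp
next
  case (Suc n)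
  from Suc.prems(2) obtain z where "(x, z) \<in> E ^^ n" "(z, y) \<in> E" by auto
  then have "(z, x) \<in> E ^^ n" "(y, z) \<in> E" using Suc by (auto dest: symD)
  then show ?case by (metis relpow_Suc_I2)
qed

definition dist_to :: "('a \<times> 'a) set \<Rightarrow> 'a set \<Rightarrow> 'a \<Rightarrow> nat" where
  "dist_to E X w = (LEAST m. \<exists>x\<in>X. (w, x) \<in> E ^^ m)"

definition nxt :: "('a \<times> 'a) set \<Rightarrow> 'a set \<Rightarrow> 'a \<Rightarrow> 'a" where
  "nxt E X w = (SOME w'. (w, w') \<in> E \<and> (\<exists>x\<in>X. (w', x) \<in> E ^^ (dist_to E X w - 1)))"

lemma nxt_prop:
  assumes "w \<notin> X" "x \<in> X" "(w, x) \<in> E ^^ m"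
  shows "(w, nxt E X w) \<in> E \<and> (\<exists>x\<in>X. (nxt E X w, x) \<in> E ^^ (dist_to E X w - 1))
         \<and> dist_to E X w \<le> m \<and> dist_to E X w \<ge> 1"
proof -
  let ?d = "dist_to E X w"
  have ex: "\<exists>m. \<exists>x\<in>X. (w, x) \<in> E ^^ m" using assms by blast
  have d1: "\<exists>x\<in>X. (w, x) \<in> E ^^ ?d" unfolding dist_to_def by (rule LeastI_ex[OF ex])
  have d2: "?d \<le> m" unfolding dist_to_def by (rule Least_le) (use assms in blast)
  have "?d \<noteq> 0"
  proof
    assume "?d = 0"
    with d1 have "w \<in> X" by (auto elim: relpow_0_E)
    with assms(1) show False by simp
  qed
  then obtain d' where dd: "?d = Suc d'" by (cases ?d) auto
  from d1 obtain x' where "x' \<in> X" "(w, x') \<in> E ^^ Suc d'" using dd by auto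
  then obtain y where "(w, y) \<in> E" "(y, x') \<in> E ^^ d'" by (metis relpow_Suc_D2)
  then have "\<exists>w'. (w, w') \<in> E \<and> (\<exists>x\<in>X. (w', x) \<in> E ^^ (?d - 1))"
    using \<open>x' \<in> X\<close> dd by auto
  then have "(w, nxt E X w) \<in> E \<and> (\<exists>x\<in>X. (nxt E X w, x) \<in> E ^^ (?d - 1))"
    unfolding nxt_def by (rule someI_ex)
  then show ?thesis using d2 dd by auto
qed

lemma reach_class:
  assumes "\<And>w. w \<notin> X \<Longrightarrow> (\<exists>x\<in>X. \<exists>m. (w, x) \<in> E ^^ m) \<Longrightarrow> (w, nxt E X w) \<in> H"
  shows "(\<exists>x\<in>X. \<exists>j\<le>m. (w, x) \<in> E ^^ j) \<Longrightarrow> (\<exists>x\<in>X. \<exists>i\<le>m. (w, x) \<in> H ^^ i)"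
proof (induction m arbitrary: w)
  case 0
  then obtain x where "x \<in> X" "(w, x) \<in> E ^^ 0" by auto
  then show ?case by (intro bexI[of _ x] exI[of _ 0]) auto
next
  case (Suc m)
  then obtain x j where x: "x \<in> X" "j \<le> Suc m" "(w, x) \<in> E ^^ j" by auto
  show ?case
  proof (cases "w \<in> X")
    case True then show ?thesis by (intro bexI[of _ w] exI[of _ 0]) auto
  next
    case False
    from nxt_prop[OF False x(1) x(3)] obtain x' where
      p: "(w, nxt E X w) \<in> E" "x' \<in> X" "(nxt E X w, x') \<in> E ^^ (dist_to E X w - 1)"
         "dist_to E X w \<le> j" "dist_to E X w \<ge> 1" by blast
    have "\<exists>x\<in>X. \<exists>i\<le>m. (nxt E X w, x) \<in> H ^^ i"
      using p x(2) by (intro Suc.IH) (auto intro!: bexI[of _ x'] exI[of _ "dist_to E X w - 1"])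
    then obtain x'' i where "x'' \<in> X" "i \<le> m" "(nxt E X w, x'') \<in> H ^^ i" by auto
    moreover have "(w, nxt E X w) \<in> H" using assms False x by blast
    ultimately have "(w, x'') \<in> H ^^ Suc i" by (metis relpow_Suc_I2)
    then show ?thesis using \<open>x'' \<in> X\<close> \<open>i \<le> m\<close> by (intro bexI[of _ x''] exI[of _ "Suc i"]) auto
  qed
qed


lemma walk_split:
  assumes "A \<union> B = V" "E \<subseteq> V \<times> V"
  shows "(u, v) \<in> E ^^ l \<Longrightarrow> u \<in> V \<Longrightarrow>
    (u \<in> A \<and> v \<in> A \<and> (u, v) \<in> (induced E A) ^^ l) \<or>
    (u \<in> B \<and> v \<in> B \<and> (u, v) \<in> (induced E B) ^^ l) \<or>
    (\<exists>i x y. i < l \<and> (u, x) \<in> E ^^ i \<and> (x, y) \<in> E \<and> (y, v) \<in> E ^^ (l - 1 - i) \<and>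
       ((x \<in> A \<and> y \<in> B) \<or> (x \<in> B \<and> y \<in> A)))"
proof (induction l arbitrary: v)
  case 0
  then have "u = v" by (auto elim: relpow_0_E)
  then show ?case using 0 assms(1) by (auto intro: relpow_0_I)
next
  case (Suc l)
  from Suc.prems(1) obtain w where w: "(u, w) \<in> E ^^ l" "(w, v) \<in> E" by (metis relpow_Suc_E)
  have vV: "v \<in> V" using w(2) assms(2) by auto
  have indA: "induced E A \<subseteq> E" and indB: "induced E B \<subseteq> E" by (auto simp: induced_def)
  from Suc.IH[OF w(1) Suc.prems(2)] consider
      (inA) "u \<in> A" "w \<in> A" "(u, w) \<in> (induced E A) ^^ l"
    | (inB) "u \<in> B" "w \<in> B" "(u, w) \<in> (induced E B) ^^ l"
    | (cr) i x y where "i < l" "(u, x) \<in> E ^^ i" "(x, y) \<in> E" "(y, w) \<in> E ^^ (l - 1 - i)"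
        "(x \<in> A \<and> y \<in> B) \<or> (x \<in> B \<and> y \<in> A)"
    by blast
  then show ?case
  proof cases
    case inA
    show ?thesis
    proof (cases "v \<in> A")
      case True
      then have "(w, v) \<in> induced E A" using w(2) inA by (auto simp: induced_def)
      then have "(u, v) \<in> (induced E A) ^^ Suc l" using inA(3) by auto
      then show ?thesis using inA True by blast
    next
      case False
      then have "v \<in> B" using vV assms(1) by auto
      have "(u, w) \<in> E ^^ l" using w(1) .
      moreover have "(v, v) \<in> E ^^ (Suc l - 1 - l)" by (auto intro: relpow_0_I)
      ultimately show ?thesis using w(2) inA \<open>v \<in> B\<close> by blast
    qed
  next
    case inB
    show ?thesis
    proof (cases "v \<in> B")
      case True
      then have "(w, v) \<in> induced E B" using w(2) inB by (auto simp: induced_def)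
      then have "(u, v) \<in> (induced E B) ^^ Suc l" using inB(3) by auto
      then show ?thesis using inB True by blast
    next
      case False
      then have "v \<in> A" using vV assms(1) by auto
      have "(u, w) \<in> E ^^ l" using w(1) .
      moreover have "(v, v) \<in> E ^^ (Suc l - 1 - l)" by (auto intro: relpow_0_I)
      ultimately show ?thesis using w(2) inB \<open>v \<in> A\<close> by blast
    qed
  next
    case cr
    have eq: "Suc l - 1 - i = Suc (l - 1 - i)" using cr(1) by simp
    have "(y, v) \<in> E ^^ (Suc l - 1 - i)" unfolding eq using cr(4) w(2) by (rule relpow_Suc_I)
    then show ?thesis using cr by (intro disjI2 disjI2 exI[of _ i] exI[of _ x] exI[of _ y]) auto
  qed
qed

lemma twin_adj:
  assumes "sym E" "A \<inter> B = {}" "(x, y) \<in> E" "x \<in> A" "y \<in> B"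
    "equiv_AB E A B x x'" "equiv_AB E A B y y'"
  shows "(x', y') \<in> E"
proof -
  have "x \<notin> B" "y \<notin> A" using assms by auto
  then have x': "x' \<in> A" "{w\<in>B. (x, w) \<in> E} = {w\<in>B. (x', w) \<in> E}"
    and y': "y' \<in> B" "{w\<in>A. (y, w) \<in> E} = {w\<in>A. (y', w) \<in> E}"
    using assms(6,7) unfolding equiv_AB_def by auto
  have "(x', y) \<in> E" using x'(2) assms(3,5) by blast
  then have "(y, x') \<in> E" using assms(1) by (auto dest: symD)
  then have "(y', x') \<in> E" using y'(2) x'(1) by blast
  then show ?thesis using assms(1) by (auto dest: symD)
qed

lemma out_ball_mono: "H1 \<subseteq> H2 \<Longrightarrow> out_ball H1 u a \<subseteq> out_ball H2 u a"
  unfolding out_ball_def using relpow_mono_sub by blast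

lemma guidance_main:
  assumes g: "graph V E" and AB: "A \<union> B = V" "A \<inter> B = {}"
    and wA: "weak_guidance A (induced E A) n HA" and wB: "weak_guidance B (induced E B) n HB"
    and Hdef: "H = HA \<union> HB \<union> {(w, nxt E X w) | w X. X \<in> V // {(u, v). equiv_AB E A B u v} \<and> w \<notin> X
                    \<and> (\<exists>x\<in>X. \<exists>m. (w, x) \<in> E ^^ m)}"
  shows "weak_guidance V E n H"
proof -
  let ?rel = "{(u, v). equiv_AB E A B u v}"
  have EV: "E \<subseteq> V \<times> V" and symE: "sym E" using g by (auto simp: graph_def)
  have HAE: "HA \<subseteq> E" using wA by (auto simp: weak_guidance_def partial_orientation_def induced_def)
  have HBE: "HB \<subseteq> E" using wB by (auto simp: weak_guidance_def partial_orientation_def induced_def)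
  have HE: "H \<subseteq> E"
  proof
    fix p assume p: "p \<in> H"
    show "p \<in> E"
    proof (cases "p \<in> HA \<union> HB")
      case True then show ?thesis using HAE HBE by blast
    next
      case False
      then obtain w X x m where pw: "p = (w, nxt E X w)" "w \<notin> X" "x \<in> X" "(w, x) \<in> E ^^ m"
        using p unfolding Hdef by blast
      show ?thesis using nxt_prop[OF pw(2-4)] pw(1) by simp
    qed
  qed
  have arcs: "\<And>X w. X \<in> V // ?rel \<Longrightarrow> w \<notin> X \<Longrightarrow> (\<exists>x\<in>X. \<exists>m. (w, x) \<in> E ^^ m) \<Longrightarrow> (w, nxt E X w) \<in> H"
    unfolding Hdef by blast
  have reach: "\<exists>x'\<in>?rel``{x}. x' \<in> out_ball H w m" if "x \<in> V" "(w, x) \<in> E ^^ m" for x w m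
  proof -
    have X: "?rel``{x} \<in> V // ?rel" using that(1) by (rule quotientI)
    have xx: "x \<in> ?rel``{x}" using that(1) AB(1) by (auto simp: equiv_AB_def)
    have "\<exists>x'\<in>?rel``{x}. \<exists>i\<le>m. (w, x') \<in> H ^^ i"
      by (rule reach_class[where E=E]) (use arcs[OF X] xx that(2) in blast)+
    then show ?thesis unfolding out_ball_def by blast
  qed
  have meet: "\<exists>a b. a + b = l - 1 \<and> (\<exists>x\<in>out_ball H u a. \<exists>y\<in>out_ball H v b. (x, y) \<in> E)"
    if "u \<in> V" "v \<in> V" "u \<noteq> v" "gdist E u v l" "l \<le> n" for u v l
  proof -
    have uvl: "(u, v) \<in> E ^^ l" using that(4) by (simp add: gdist_def)
    have sideA: "\<exists>a b. a + b = l - 1 \<and> (\<exists>x\<in>out_ball H u a. \<exists>y\<in>out_ball H v b. (x, y) \<in> E)"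
      if S: "weak_guidance S (induced E S) n HS" "HS \<subseteq> H" "u \<in> S" "v \<in> S" "(u, v) \<in> (induced E S) ^^ l" for S HS
    proof -
      have "\<forall>m<l. (u, v) \<notin> (induced E S) ^^ m"
      proof (intro allI impI)
        fix m assume "m < l"
        then have "(u, v) \<notin> E ^^ m" using \<open>gdist E u v l\<close> unfolding gdist_def by blast
        moreover have "(induced E S) ^^ m \<subseteq> E ^^ m" by (rule relpow_mono_sub) (auto simp: induced_def)
        ultimately show "(u, v) \<notin> (induced E S) ^^ m" by blast
      qed
      then have "gdist (induced E S) u v l" using S(5) by (simp add: gdist_def)
      then obtain a b x y where ab: "a + b = l - 1" "x \<in> out_ball HS u a" "y \<in> out_ball HS v b"
        "(x, y) \<in> induced E S"
        using S(1,3,4) \<open>u \<noteq> v\<close> \<open>l \<le> n\<close> unfolding weak_guidance_def by blast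
      have "x \<in> out_ball H u a" "y \<in> out_ball H v b" using ab(2,3) out_ball_mono[OF S(2)] by blast+
      moreover have "(x, y) \<in> E" using ab(4) by (simp add: induced_def)
      ultimately show ?thesis using ab(1) by blast
    qed
    have cross: "\<exists>a b. a + b = l - 1 \<and> (\<exists>x\<in>out_ball H u a. \<exists>y\<in>out_ball H v b. (x, y) \<in> E)"
      if c: "i < l" "(u, x) \<in> E ^^ i" "(x, y) \<in> E" "(y, v) \<in> E ^^ (l - 1 - i)"
        "\<And>x' y'. (x, x') \<in> ?rel \<Longrightarrow> (y, y') \<in> ?rel \<Longrightarrow> (x', y') \<in> E" for i x y
    proof -
      have xV: "x \<in> V" "y \<in> V" using c(3) EV by auto
      obtain x' where x': "x' \<in> ?rel``{x}" "x' \<in> out_ball H u i" using reach[OF xV(1) c(2)] by blast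
      have "(v, y) \<in> E ^^ (l - 1 - i)" using relpow_sym[OF symE c(4)] .
      then obtain y' where y': "y' \<in> ?rel``{y}" "y' \<in> out_ball H v (l - 1 - i)" using reach[OF xV(2)] by blast
      have "(x', y') \<in> E" using c(5) x'(1) y'(1) by blast
      moreover have "i + (l - 1 - i) = l - 1" using c(1) by simp
      ultimately show ?thesis using x'(2) y'(2) by blast
    qed
    from walk_split[OF AB(1) EV uvl that(1)] consider
        (inA) "u \<in> A" "v \<in> A" "(u, v) \<in> (induced E A) ^^ l"
      | (inB) "u \<in> B" "v \<in> B" "(u, v) \<in> (induced E B) ^^ l"
      | (cr) i x y where "i < l" "(u, x) \<in> E ^^ i" "(x, y) \<in> E" "(y, v) \<in> E ^^ (l - 1 - i)"
          "(x \<in> A \<and> y \<in> B) \<or> (x \<in> B \<and> y \<in> A)"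
      by blast
    then show ?thesis
    proof cases
      case inA
      have "HA \<subseteq> H" unfolding Hdef by blast
      from sideA[OF wA this inA] show ?thesis .
    next
      case inB
      have "HB \<subseteq> H" unfolding Hdef by blast
      from sideA[OF wB this inB] show ?thesis .
    next
      case cr
      have "\<And>x' y'. (x, x') \<in> ?rel \<Longrightarrow> (y, y') \<in> ?rel \<Longrightarrow> (x', y') \<in> E"
      proof -
        fix x' y' assume "(x, x') \<in> ?rel" "(y, y') \<in> ?rel"
        then have e: "equiv_AB E A B x x'" "equiv_AB E A B y y'" by auto
        show "(x', y') \<in> E"
        proof (cases "x \<in> A \<and> y \<in> B")
          case True then show ?thesis using twin_adj[OF symE AB(2) cr(3) _ _ e] by blast
        next
          case False
          then have "x \<in> B" "y \<in> A" using cr(5) by auto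
          have "(y, x) \<in> E" using cr(3) symE by (auto dest: symD)
          then have "(y', x') \<in> E" using twin_adj[OF symE AB(2) _ \<open>y \<in> A\<close> \<open>x \<in> B\<close> e(2) e(1)] by blast
          then show ?thesis using symE by (auto dest: symD)
        qed
      qed
      then show ?thesis using cross[OF cr(1-4)] by blast
    qed
  qed
  show ?thesis unfolding weak_guidance_def partial_orientation_def using HE meet by blast
qed


lemma wge_sub:
  assumes "weak_guidance_enat S (induced E S) r HS"
  shows "HS \<subseteq> induced E S"
proof (cases r)
  case (enat n)
  then show ?thesis using assms
    by (simp add: weak_guidance_enat_def weak_guidance_def partial_orientation_def)
next
  case infinity
  then have "weak_guidance S (induced E S) 1 HS" using assms by (simp add: weak_guidance_enat_def)
  then show ?thesis by (simp add: weak_guidance_def partial_orientation_def)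
qed

theorem lemma33:
  fixes V A B :: "'a set" and E H\<^sub>A H\<^sub>B :: "('a \<times> 'a) set" and r :: enat and c k :: nat
  assumes "graph V E"
    and "r \<ge> 1"
    and "A \<union> B = V" and "A \<inter> B = {}"
    and "card (V // {(u, v). equiv_AB E A B u v}) = k"
    and "weak_guidance_enat A (induced E A) r H\<^sub>A" and "max_outdeg_le A H\<^sub>A c"
    and "weak_guidance_enat B (induced E B) r H\<^sub>B" and "max_outdeg_le B H\<^sub>B c"
  shows "\<exists>H. weak_guidance_enat V E r H \<and> max_outdeg_le V H (c + k)"
proof -
  let ?rel = "{(u, v). equiv_AB E A B u v}"
  define R where "R = {(w, nxt E X w) | w X. X \<in> V // ?rel \<and> w \<notin> X \<and> (\<exists>x\<in>X. \<exists>m. (w, x) \<in> E ^^ m)}"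
  define H where "H = H\<^sub>A \<union> H\<^sub>B \<union> R"
  have finV: "finite V" using assms(1) by (simp add: graph_def)
  have G: "weak_guidance V E n H"
    if "weak_guidance A (induced E A) n H\<^sub>A" "weak_guidance B (induced E B) n H\<^sub>B" for n
    by (rule guidance_main[OF assms(1,3,4) that]) (simp add: H_def R_def)
  have WG: "weak_guidance_enat V E r H"
  proof (cases r)
    case (enat n)
    then show ?thesis using assms(6,8) G by (simp add: weak_guidance_enat_def)
  next
    case infinity
    then show ?thesis using assms(6,8) G by (simp add: weak_guidance_enat_def)
  qed
  have HA: "H\<^sub>A \<subseteq> A \<times> A" using wge_sub[OF assms(6)] by (auto simp: induced_def)
  have HB: "H\<^sub>B \<subseteq> B \<times> B" using wge_sub[OF assms(8)] by (auto simp: induced_def)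
  have relV: "?rel \<subseteq> V \<times> V" using assms(3) by (auto simp: equiv_AB_def)
  have finQ: "finite (V // ?rel)" by (rule finite_quotient[OF finV relV])
  have OD: "max_outdeg_le V H (c + k)"
    unfolding max_outdeg_le_def
  proof
    fix w assume wV: "w \<in> V"
    let ?OA = "{w'. (w, w') \<in> H\<^sub>A}" and ?OB = "{w'. (w, w') \<in> H\<^sub>B}"
      and ?OR = "(\<lambda>X. nxt E X w) ` (V // ?rel)"
    have sub: "{w'. (w, w') \<in> H} \<subseteq> ?OA \<union> ?OB \<union> ?OR" unfolding H_def R_def by blast
    have fA: "finite ?OA" using HA assms(3) finV by (auto intro: finite_subset[of _ V])
    have fB: "finite ?OB" using HB assms(3) finV by (auto intro: finite_subset[of _ V])
    have fR: "finite ?OR" using finQ by simp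
    have "card {w'. (w, w') \<in> H} \<le> card (?OA \<union> ?OB \<union> ?OR)"
      by (rule card_mono) (use fA fB fR sub in auto)
    also have "\<dots> \<le> card ?OA + card ?OB + card ?OR"
      by (meson add_right_mono card_Un_le order_trans)
    also have "card ?OR \<le> k" using card_image_le[OF finQ] assms(5) by simp
    also have "card ?OA + card ?OB \<le> c"
    proof (cases "w \<in> A")
      case True
      then have "w \<notin> B" using assms(4) by auto
      then have "?OB = {}" using HB by auto
      moreover have "card ?OA \<le> c" using assms(7) True by (simp add: max_outdeg_le_def)
      ultimately show ?thesis by simp
    next
      case False
      then have "w \<in> B" using wV assms(3) by auto
      have "?OA = {}" using HA False by auto
      moreover have "card ?OB \<le> c" using assms(9) \<open>w \<in> B\<close> by (simp add: max_outdeg_le_def)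
      ultimately show ?thesis by simp
    qed
    finally show "card {w'. (w, w') \<in> H} \<le> c + k" by simp
  qed
  show ?thesis using WG OD by blast
qed

end
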